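(* Let $\Phi$ be the historical operator. For each of the following axioms there exists a standard rule $R$ satisfying the standard version of the axiom such that the general rule $\Phi(R)$ violates the general version of that axiom: claims monotonicity, composition up, composition down, self-duality, population monotonicity, and consistency.
   Context: Agents are elements of $\mathbb{N}$; $N$ denotes a nonempty finite subset of $\mathbb{N}$. A (standard) claims problem is a triple $(N,c,E)$ with $c\in\mathbb{R}_+^N$, $E\in\mathbb{R}_+$, $C=\sum_{i\in N}c_i>0$ and $E\le C$. An allocation for it is $x\in\mathbb{R}^N$ with $0\le x_i\le c_i$ and $\sum_ix_i=E$. A standard rule $R$ assigns to each standard claims problem an allocation $R(N,c,E)$. A history for $N$ is a finite sequence $h=\{(c^{(t)},x^{(t)})\}_{t=1}^{|T|}$ where for each $t$, $c^{(t)}\in\mathbb{R}_+^N$ and $x^{(t)}$ is an allocation of the standard problem $(N,c^{(t)},\sum_ix_i^{(t)})$. A historical claims problem is $(N,c,E,h)$ with $(N,c,E)$ a standard claims problem and $h$ a history for $N$; a general rule $S$ assigns to each an allocation of $(N,c,E)$. For $M\subseteq N$, $h_M$ denotes the history obtained by restricting every $c^{(t)}$ and $x^{(t)}$ to coordinates in $M$. Let $\Delta^c_i=\sum_tc^{(t)}_i$, $\Delta^x_i=\sum_tx^{(t)}_i$, $\widetilde{c}_i=c_i+\Delta^c_i-\Delta^x_i$. Historical operator: for a standard rule $R$, $\Phi_i(R)(N,c,E,h)=\min\{c_i,R_i(N,\widetilde{c},E)+\lambda\}$, where $\lambda\in\mathbb{R}_+$ is such that these amounts sum to $E$ (such $\lambda$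 exists and the resulting vector does not depend on its choice). Standard axioms: claims monotonicity: for $i\in N$ and $c'_i>c_i$, $R_i(N,(c'_i,c_{-i}),E)\ge R_i(N,c,E)$; composition up: for $E_1,E_2>0$ with $E_1+E_2=E$, $R(N,c,E)=R(N,c,E_1)+R(N,c-R(N,c,E_1),E_2)$; composition down: for $E<E'\le C$, $R(N,c,E)=R(N,R(N,c,E'),E)$; self-duality: $R(N,c,C-E)=c-R(N,c,E)$; population monotonicity: if $N\subseteq N'$, $(N',c',E)$ is a problem with $c'_N=c$, then $R_i(N',c',E)\le R_i(N,c,E)$ for all $i\in N$; consistency: for $M\subset N$ and $i\in M$, $R_i(N,c,E)=R_i(M,c_M,\sum_{k\in M}R_k(N,c,E))$. General axioms: the same conditions for $S$ with the history held fixed: claims monotonicity: $S_i(N,(c'_i,c_{-i}),E,h)\ge S_i(N,c,E,h)$ for $c'_i>c_i$; composition up: $S(N,c,E,h)=S(N,c,E_1,h)+S(N,c-S(N,c,E_1,h),E_2,h)$; composition down: $S(N,c,E,h)=S(N,S(N,c,E',h),E,h)$ for $E<E'\le C$; self-duality: $S(N,c,C-E,h)=c-S(N,c,E,h)$; population monotonicity: if $N\subseteq N'$, $c'_N=c$ and $h'_N=h$, then $S_i(N',c',E,h')\le S_i(N,c,E,h)$ for all $i\in N$; consistency: for $M\subset N$, $i\in M$, $S_i(N,c,E,h)=S_i(M,c_M,E_M,h_M)$ with $E_M=\sum_{k\in M}S_k(N,c,E,h)$. *)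

theory Defs
  imports Complex_Main "HOL-Library.FuncSet"
begin

text \<open>Agents are naturals; a vector in R^N is an extensional function on N
  (value undefined outside N), so that it is determined by its coordinates in N.\<close>

type_synonym vec = "nat \<Rightarrow> real"
type_synonym history = "(vec \<times> vec) list"

definition std_problem :: "nat set \<Rightarrow> vec \<Rightarrow> real \<Rightarrow> bool" where
  "std_problem N c E \<longleftrightarrow> finite N \<and> N \<noteq> {} \<and> c \<in> extensional N \<and>
     (\<forall>i\<in>N. 0 \<le> c i) \<and> 0 \<le> E \<and> 0 < (\<Sum>i\<in>N. c i) \<and> E \<le> (\<Sum>i\<in>N. c i)"

definition allocation :: "nat set \<Rightarrow> vec \<Rightarrow> real \<Rightarrow> vec \<Rightarrow> bool" where
  "allocation N c E x \<longleftrightarrow> x \<in> extensional N \<and> (\<forall>i\<in>N. 0 \<le> x i \<and> x i \<le> c i) \<and>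
     (\<Sum>i\<in>N. x i) = E"

definition std_rule :: "(nat set \<Rightarrow> vec \<Rightarrow> real \<Rightarrow> vec) \<Rightarrow> bool" where
  "std_rule R \<longleftrightarrow> (\<forall>N c E. std_problem N c E \<longrightarrow> allocation N c E (R N c E))"

definition is_history :: "nat set \<Rightarrow> history \<Rightarrow> bool" where
  "is_history N h \<longleftrightarrow> (\<forall>(ct, xt)\<in>set h. ct \<in> extensional N \<and> xt \<in> extensional N \<and>
     (\<forall>i\<in>N. 0 \<le> ct i) \<and> allocation N ct (\<Sum>i\<in>N. xt i) xt)"

definition hist_problem :: "nat set \<Rightarrow> vec \<Rightarrow> real \<Rightarrow> history \<Rightarrow> bool" where
  "hist_problem N c E h \<longleftrightarrow> std_problem N c E \<and> is_history N h"

definition restrict_history :: "history \<Rightarrow> nat set \<Rightarrow> history" where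
  "restrict_history h M = map (\<lambda>(ct, xt). (restrict ct M, restrict xt M)) h"

definition ctilde :: "nat set \<Rightarrow> vec \<Rightarrow> history \<Rightarrow> vec" where
  "ctilde N c h = restrict (\<lambda>i. c i + (\<Sum>p\<leftarrow>h. fst p i) - (\<Sum>p\<leftarrow>h. snd p i)) N"

definition Phi :: "(nat set \<Rightarrow> vec \<Rightarrow> real \<Rightarrow> vec) \<Rightarrow> nat set \<Rightarrow> vec \<Rightarrow> real \<Rightarrow> history \<Rightarrow> vec" where
  "Phi R N c E h =
    (let ct = ctilde N c h;
         lam = (SOME l. 0 \<le> l \<and> (\<Sum>i\<in>N. min (c i) (R N ct E i + l)) = E)
     in restrict (\<lambda>i. min (c i) (R N ct E i + lam)) N)"

definition std_claims_mono :: "(nat set \<Rightarrow> vec \<Rightarrow> real \<Rightarrow> vec) \<Rightarrow> bool" where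
  "std_claims_mono R \<longleftrightarrow> (\<forall>N c E i ci'. std_problem N c E \<and> i \<in> N \<and> ci' > c i \<longrightarrow>
      R N (c(i := ci')) E i \<ge> R N c E i)"

definition std_comp_up :: "(nat set \<Rightarrow> vec \<Rightarrow> real \<Rightarrow> vec) \<Rightarrow> bool" where
  "std_comp_up R \<longleftrightarrow> (\<forall>N c E E1 E2. std_problem N c E \<and> 0 < E1 \<and> 0 < E2 \<and> E1 + E2 = E \<longrightarrow>
      (\<forall>i\<in>N. R N c E i = R N c E1 i + R N (restrict (\<lambda>k. c k - R N c E1 k) N) E2 i))"

definition std_comp_down :: "(nat set \<Rightarrow> vec \<Rightarrow> real \<Rightarrow> vec) \<Rightarrow> bool" where
  "std_comp_down R \<longleftrightarrow> (\<forall>N c E E'. std_problem N c E \<and> E < E' \<and> E' \<le> (\<Sum>i\<in>N. c i) \<longrightarrow>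
      (\<forall>i\<in>N. R N c E i = R N (R N c E') E i))"

definition std_self_dual :: "(nat set \<Rightarrow> vec \<Rightarrow> real \<Rightarrow> vec) \<Rightarrow> bool" where
  "std_self_dual R \<longleftrightarrow> (\<forall>N c E. std_problem N c E \<longrightarrow>
      (\<forall>i\<in>N. R N c ((\<Sum>k\<in>N. c k) - E) i = c i - R N c E i))"

definition std_pop_mono :: "(nat set \<Rightarrow> vec \<Rightarrow> real \<Rightarrow> vec) \<Rightarrow> bool" where
  "std_pop_mono R \<longleftrightarrow> (\<forall>N N' c' E. N \<subseteq> N' \<and> std_problem N' c' E \<and>
      std_problem N (restrict c' N) E \<longrightarrow>
      (\<forall>i\<in>N. R N' c' E i \<le> R N (restrict c' N) E i))"

definition std_consistent :: "(nat set \<Rightarrow> vec \<Rightarrow> real \<Rightarrow> vec) \<Rightarrow> bool" where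
  "std_consistent R \<longleftrightarrow> (\<forall>N M c E. std_problem N c E \<and> M \<subset> N \<and>
      std_problem M (restrict c M) (\<Sum>k\<in>M. R N c E k) \<longrightarrow>
      (\<forall>i\<in>M. R N c E i = R M (restrict c M) (\<Sum>k\<in>M. R N c E k) i))"

definition gen_claims_mono :: "(nat set \<Rightarrow> vec \<Rightarrow> real \<Rightarrow> history \<Rightarrow> vec) \<Rightarrow> bool" where
  "gen_claims_mono S \<longleftrightarrow> (\<forall>N c E h i ci'. hist_problem N c E h \<and> i \<in> N \<and> ci' > c i \<longrightarrow>
      S N (c(i := ci')) E h i \<ge> S N c E h i)"

definition gen_comp_up :: "(nat set \<Rightarrow> vec \<Rightarrow> real \<Rightarrow> history \<Rightarrow> vec) \<Rightarrow> bool" where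
  "gen_comp_up S \<longleftrightarrow> (\<forall>N c E h E1 E2. hist_problem N c E h \<and> 0 < E1 \<and> 0 < E2 \<and> E1 + E2 = E \<longrightarrow>
      (\<forall>i\<in>N. S N c E h i = S N c E1 h i + S N (restrict (\<lambda>k. c k - S N c E1 h k) N) E2 h i))"

definition gen_comp_down :: "(nat set \<Rightarrow> vec \<Rightarrow> real \<Rightarrow> history \<Rightarrow> vec) \<Rightarrow> bool" where
  "gen_comp_down S \<longleftrightarrow> (\<forall>N c E h E'. hist_problem N c E h \<and> E < E' \<and> E' \<le> (\<Sum>i\<in>N. c i) \<longrightarrow>
      (\<forall>i\<in>N. S N c E h i = S N (S N c E' h) E h i))"

definition gen_self_dual :: "(nat set \<Rightarrow> vec \<Rightarrow> real \<Rightarrow> history \<Rightarrow> vec) \<Rightarrow> bool" where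
  "gen_self_dual S \<longleftrightarrow> (\<forall>N c E h. hist_problem N c E h \<longrightarrow>
      (\<forall>i\<in>N. S N c ((\<Sum>k\<in>N. c k) - E) h i = c i - S N c E h i))"

definition gen_pop_mono :: "(nat set \<Rightarrow> vec \<Rightarrow> real \<Rightarrow> history \<Rightarrow> vec) \<Rightarrow> bool" where
  "gen_pop_mono S \<longleftrightarrow> (\<forall>N N' c' E h'. N \<subseteq> N' \<and> hist_problem N' c' E h' \<and>
      hist_problem N (restrict c' N) E (restrict_history h' N) \<longrightarrow>
      (\<forall>i\<in>N. S N' c' E h' i \<le> S N (restrict c' N) E (restrict_history h' N) i))"

definition gen_consistent :: "(nat set \<Rightarrow> vec \<Rightarrow> real \<Rightarrow> history \<Rightarrow> vec) \<Rightarrow> bool" where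
  "gen_consistent S \<longleftrightarrow> (\<forall>N M c E h. hist_problem N c E h \<and> M \<subset> N \<and>
      hist_problem M (restrict c M) (\<Sum>k\<in>M. S N c E h k) (restrict_history h M) \<longrightarrow>
      (\<forall>i\<in>M. S N c E h i = S M (restrict c M) (\<Sum>k\<in>M. S N c E h k) (restrict_history h M) i))"

end

theory Submission
  imports Defs
begin


lemma Phi_eval:
  assumes fin: "finite N" and l0: "0 \<le> l0"
    and s: "(\<Sum>i\<in>N. min (c i) (R N (ctilde N c h) E i + l0)) = E"
  shows "Phi R N c E h = restrict (\<lambda>i. min (c i) (R N (ctilde N c h) E i + l0)) N"
proof -
  define r where "r = R N (ctilde N c h) E"
  define l where "l = (SOME l. 0 \<le> l \<and> (\<Sum>i\<in>N. min (c i) (r i + l)) = E)"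
  have ex: "\<exists>l. 0 \<le> l \<and> (\<Sum>i\<in>N. min (c i) (r i + l)) = E" using l0 s r_def by blast
  have L: "0 \<le> l \<and> (\<Sum>i\<in>N. min (c i) (r i + l)) = E"
    unfolding l_def by (rule someI_ex[OF ex])
  have s': "(\<Sum>i\<in>N. min (c i) (r i + l0)) = E" using s r_def by simp
  have eq: "\<forall>i\<in>N. min (c i) (r i + l) = min (c i) (r i + l0)"
  proof (cases "l \<le> l0")
    case True
    define d where "d = (\<lambda>i. min (c i) (r i + l0) - min (c i) (r i + l))"
    have "sum d N = 0"
      using L s' unfolding d_def by (simp add: sum_subtractf)
    moreover have "\<forall>i\<in>N. 0 \<le> d i"
      using True unfolding d_def by (auto simp: min_def)
    ultimately have "\<forall>i\<in>N. d i = 0" using sum_nonneg_eq_0_iff[OF fin, of d] by blast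
    then show ?thesis unfolding d_def by simp
  next
    case False
    define d where "d = (\<lambda>i. min (c i) (r i + l) - min (c i) (r i + l0))"
    have "sum d N = 0"
      using L s' unfolding d_def by (simp add: sum_subtractf)
    moreover have "\<forall>i\<in>N. 0 \<le> d i"
      using False unfolding d_def by (auto simp: min_def)
    ultimately have "\<forall>i\<in>N. d i = 0" using sum_nonneg_eq_0_iff[OF fin, of d] by blast
    then show ?thesis unfolding d_def by simp
  qed
  show ?thesis unfolding Phi_def Let_def r_def[symmetric] l_def[symmetric]
    using eq by (auto simp: restrict_def)
qed

definition prop_rule :: "nat set \<Rightarrow> vec \<Rightarrow> real \<Rightarrow> vec" where
  "prop_rule N c E = restrict (\<lambda>i. c i * E / (\<Sum>j\<in>N. c j)) N"

lemma prop_std: "std_rule prop_rule"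
  unfolding std_rule_def
proof (intro allI impI)
  fix N c E assume p: "std_problem N c E"
  let ?C = "\<Sum>j\<in>N. c j"
  have C: "0 < ?C" "E \<le> ?C" "0 \<le> E" "\<forall>i\<in>N. 0 \<le> c i" using p by (auto simp: std_problem_def)
  have "\<forall>i\<in>N. c i * E / ?C \<le> c i"
  proof
    fix i assume "i \<in> N"
    then have "c i * E \<le> c i * ?C" using C by (intro mult_left_mono) auto
    then show "c i * E / ?C \<le> c i" using C by (simp add: divide_simps)
  qed
  moreover have "(\<Sum>i\<in>N. c i * E / ?C) = E"
    using C by (simp add: sum_divide_distrib[symmetric] sum_distrib_right[symmetric])
  ultimately show "allocation N c E (prop_rule N c E)"
    unfolding allocation_def prop_rule_def using C by auto
qed

lemma prop_self_dual: "std_self_dual prop_rule"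
  unfolding std_self_dual_def
proof (intro allI impI ballI)
  fix N c E i assume p: "std_problem N c E" and i: "i \<in> N"
  have C: "(\<Sum>j\<in>N. c j) \<noteq> 0" using p by (auto simp: std_problem_def)
  show "prop_rule N c ((\<Sum>k\<in>N. c k) - E) i = c i - prop_rule N c E i"
    using i C by (simp add: prop_rule_def field_simps)
qed

lemma prop_comp_down: "std_comp_down prop_rule"
  unfolding std_comp_down_def
proof (intro allI impI ballI)
  fix N c E E' i assume a: "std_problem N c E \<and> E < E' \<and> E' \<le> (\<Sum>i\<in>N. c i)" and i: "i \<in> N"
  let ?C = "\<Sum>j\<in>N. c j"
  have C: "0 < ?C" "0 \<le> E" using a by (auto simp: std_problem_def)
  have s: "(\<Sum>j\<in>N. c j * E' / ?C) = E'"
    using C by (simp add: sum_divide_distrib[symmetric] sum_distrib_right[symmetric])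
  have "E' > 0" using a C by linarith
  then show "prop_rule N c E i = prop_rule N (prop_rule N c E') E i"
    using i C \<open>E' > 0\<close> s by (simp add: prop_rule_def)
qed

lemma prop_claims_mono: "std_claims_mono prop_rule"
  unfolding std_claims_mono_def
proof (intro allI impI)
  fix N c E i ci' assume a: "std_problem N c E \<and> i \<in> N \<and> c i < ci'"
  let ?C = "\<Sum>j\<in>N. c j"
  have fin: "finite N" and i: "i \<in> N" and lt: "c i < ci'" using a by (auto simp: std_problem_def)
  have C: "0 < ?C" "0 \<le> E" "\<forall>j\<in>N. 0 \<le> c j" using a by (auto simp: std_problem_def)
  have ciC: "c i \<le> ?C" using fin i C(3) by (intro member_le_sum) auto
  have s1: "?C = c i + (\<Sum>j\<in>N-{i}. c j)" using fin i by (simp add: sum.remove)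
  have s2: "(\<Sum>j\<in>N. (c(i:=ci')) j) = ci' + (\<Sum>j\<in>N-{i}. c j)"
    using fin i by (simp add: sum.remove)
  define D where "D = (\<Sum>j\<in>N-{i}. c j)"
  have D: "0 \<le> D" unfolding D_def using C(3) by (intro sum_nonneg) auto
  have pos: "0 < ci' + D" using C(1) s1 lt D unfolding D_def by linarith
  have key: "c i * E * (ci' + D) \<le> ci' * E * (c i + D)"
  proof -
    have "c i * (ci' + D) \<le> ci' * (c i + D)"
      using lt D by (simp add: algebra_simps mult_left_mono)
    then show ?thesis using C(2) by (metis mult.commute mult.left_commute mult_left_mono)
  qed
  show "prop_rule N c E i \<le> prop_rule N (c(i := ci')) E i"
    using i s1 s2 C(1) pos key unfolding prop_rule_def D_def[symmetric]
    by (simp add: divide_simps)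
qed

lemma prop_comp_up: "std_comp_up prop_rule"
  unfolding std_comp_up_def
proof (intro allI impI ballI)
  fix N c E E1 E2 i assume a: "std_problem N c E \<and> 0 < E1 \<and> 0 < E2 \<and> E1 + E2 = E" and i: "i \<in> N"
  let ?C = "\<Sum>j\<in>N. c j"
  have C: "0 < ?C" "E \<le> ?C" using a by (auto simp: std_problem_def)
  have ne: "?C - E1 \<noteq> 0" using a C by linarith
  have s: "(\<Sum>k\<in>N. c k - c k * E1 / ?C) = ?C - E1"
    using C by (simp add: sum_subtractf sum_divide_distrib[symmetric] sum_distrib_right[symmetric])
  have "prop_rule N (restrict (\<lambda>k. c k - prop_rule N c E1 k) N) E2 i = (c i - c i * E1 / ?C) * E2 / (?C - E1)"
    using i s by (simp add: prop_rule_def)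
  also have "... = c i * E2 / ?C" using C ne by (simp add: field_simps)
  finally have X: "prop_rule N (restrict (\<lambda>k. c k - prop_rule N c E1 k) N) E2 i = c i * E2 / ?C" .
  show "prop_rule N c E i = prop_rule N c E1 i + prop_rule N (restrict (\<lambda>k. c k - prop_rule N c E1 k) N) E2 i"
  proof -
    have E: "E = E1 + E2" using a by simp
    have "c i * E / ?C = c i * E1 / ?C + c i * E2 / ?C" unfolding E by (simp add: distrib_left add_divide_distrib)
    then show ?thesis using i \<open>prop_rule N (restrict (\<lambda>k. c k - prop_rule N c E1 k) N) E2 i = c i * E2 / ?C\<close>
      by (simp add: prop_rule_def)
  qed
qed

lemma prop_pop_mono: "std_pop_mono prop_rule"
  unfolding std_pop_mono_def
proof (intro allI impI ballI)
  fix N N' c' E i assume a: "N \<subseteq> N' \<and> std_problem N' c' E \<and> std_problem N (restrict c' N) E" and i: "i \<in> N"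
  have fin: "finite N'" and nn: "\<forall>j\<in>N'. 0 \<le> c' j" and E: "0 \<le> E" using a by (auto simp: std_problem_def)
  have sN: "(\<Sum>j\<in>N. restrict c' N j) = (\<Sum>j\<in>N. c' j)" by simp
  have pos: "0 < (\<Sum>j\<in>N. c' j)" using a by (auto simp: std_problem_def)
  have le: "(\<Sum>j\<in>N. c' j) \<le> (\<Sum>j\<in>N'. c' j)" using a fin nn by (intro sum_mono2) auto
  have ci: "0 \<le> c' i * E" using i a nn E by auto
  have "c' i * E / (\<Sum>j\<in>N'. c' j) \<le> c' i * E / (\<Sum>j\<in>N. c' j)"
    using ci pos le by (intro divide_left_mono) auto
  then show "prop_rule N' c' E i \<le> prop_rule N (restrict c' N) E i"
    using i a by (auto simp: prop_rule_def)
qed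

lemma prop_consistent: "std_consistent prop_rule"
  unfolding std_consistent_def
proof (intro allI impI ballI)
  fix N M c E i assume a: "std_problem N c E \<and> M \<subset> N \<and> std_problem M (restrict c M) (\<Sum>k\<in>M. prop_rule N c E k)" and i: "i \<in> M"
  have pos: "0 < (\<Sum>j\<in>M. c j)" using a by (auto simp: std_problem_def)
  have C: "(\<Sum>j\<in>N. c j) \<noteq> 0" using a by (auto simp: std_problem_def)
  have sub: "M \<subseteq> N" using a by auto
  have s: "(\<Sum>k\<in>M. prop_rule N c E k) = (\<Sum>k\<in>M. c k) * E / (\<Sum>j\<in>N. c j)"
    using sub by (simp add: prop_rule_def sum_divide_distrib[symmetric] sum_distrib_right[symmetric] subsetD cong: sum.cong)
  show "prop_rule N c E i = prop_rule M (restrict c M) (\<Sum>k\<in>M. prop_rule N c E k) i"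
    apply (subst s)
    using i sub pos C by (auto simp: prop_rule_def field_simps)
qed



definition pr3 :: "vec \<Rightarrow> real \<Rightarrow> vec" where
  "pr3 c E = restrict (\<lambda>i. if i = 0 then min (c 0) E
      else if i = 1 then min (c 1) (E - min (c 0) E)
      else E - min (c 0) E - min (c 1) (E - min (c 0) E)) {0,1,2}"

definition pr3s :: "vec \<Rightarrow> real \<Rightarrow> vec" where
  "pr3s c E = restrict (\<lambda>i. if i = 1 then min (c 1) E
      else if i = 0 then min (c 0) (E - min (c 1) E)
      else E - min (c 1) E - min (c 0) (E - min (c 1) E)) {0,1,2}"

definition R_cu :: "nat set \<Rightarrow> vec \<Rightarrow> real \<Rightarrow> vec" where
  "R_cu N c E = (if N = {0,1,2} then pr3 c E else prop_rule N c E)"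

definition R_cm :: "nat set \<Rightarrow> vec \<Rightarrow> real \<Rightarrow> vec" where
  "R_cm N c E = (if N = {0,1,2} then (if c 2 < 1 then pr3 c E else pr3s c E) else prop_rule N c E)"

lemma sp3: "std_problem {0,1,2} c E \<Longrightarrow> 0 \<le> c 0 \<and> 0 \<le> c 1 \<and> 0 \<le> c 2 \<and> 0 \<le> E \<and> E \<le> c 0 + c 1 + c 2"
  by (auto simp: std_problem_def)

lemma pr3_alloc: "std_problem {0,1,2} c E \<Longrightarrow> allocation {0,1,2} c E (pr3 c E)"
  apply (drule sp3)
  unfolding allocation_def pr3_def by (auto simp: min_def)

lemma pr3s_alloc: "std_problem {0,1,2} c E \<Longrightarrow> allocation {0,1,2} c E (pr3s c E)"
  apply (drule sp3)
  unfolding allocation_def pr3s_def by (auto simp: min_def)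

lemma R_cu_std: "std_rule R_cu"
  using prop_std pr3_alloc unfolding std_rule_def R_cu_def by auto

lemma R_cm_std: "std_rule R_cm"
  using prop_std pr3_alloc pr3s_alloc unfolding std_rule_def R_cm_def by auto

lemma pr3_comp_up:
  assumes "std_problem {0,1,2} c E" "0 < E1" "0 < E2" "E1 + E2 = E" "i \<in> {0,1,2}"
  shows "pr3 c E i = pr3 c E1 i + pr3 (restrict (\<lambda>k. c k - pr3 c E1 k) {0,1,2}) E2 i"
  using sp3[OF assms(1)] assms(2-5) unfolding pr3_def by (auto simp: min_def)

lemma R_cu_comp_up: "std_comp_up R_cu"
  using prop_comp_up pr3_comp_up unfolding std_comp_up_def R_cu_def by auto

lemma R_cm_claims_mono: "std_claims_mono R_cm"
  unfolding std_claims_mono_def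
proof (intro allI impI)
  fix N c E i ci' assume a: "std_problem N c E \<and> i \<in> N \<and> c i < ci'"
  show "R_cm N c E i \<le> R_cm N (c(i := ci')) E i"
  proof (cases "N = {0,1,2}")
    case False
    then show ?thesis using a prop_claims_mono unfolding std_claims_mono_def R_cm_def by auto
  next
    case True
    have b: "0 \<le> c 0 \<and> 0 \<le> c 1 \<and> 0 \<le> c 2 \<and> 0 \<le> E \<and> E \<le> c 0 + c 1 + c 2"
      using a True sp3 by blast
    have i: "i = 0 \<or> i = 1 \<or> i = 2" using a True by auto
    show ?thesis using True b i a unfolding R_cm_def pr3_def pr3s_def by (auto simp: min_def)
  qed
qed



definition v3 :: "real \<Rightarrow> real \<Rightarrow> real \<Rightarrow> vec" where
  "v3 a b d = restrict (\<lambda>i. if i = 0 then a else if i = 1 then b else d) {0,1,2}"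

lemma v3_simps[simp]: "v3 a b d 0 = a" "v3 a b d 1 = b" "v3 a b d 2 = d" "v3 a b d \<in> extensional {0,1,2}"
  "v3 a b d (Suc 0) = b" "v3 a b d \<in> extensional {0, Suc 0, 2}"
  by (auto simp: v3_def)

lemma ctilde1[simp]: "i \<in> N \<Longrightarrow> ctilde N c [(d, x)] i = c i + d i - x i"
  by (simp add: ctilde_def)

lemma cm_counter: "\<not> gen_claims_mono (Phi R_cm)"
proof
  assume g: "gen_claims_mono (Phi R_cm)"
  let ?N = "{0,1,2::nat}"
  let ?c = "v3 1 5 (1/2)"
  let ?h = "[(v3 10 0 0, v3 0 0 0)]"
  have hp: "hist_problem ?N ?c 2 ?h"
    by (simp add: hist_problem_def std_problem_def is_history_def allocation_def)
  have e1: "Phi R_cm ?N ?c 2 ?h = restrict (\<lambda>i. min (?c i) (R_cm ?N (ctilde ?N ?c ?h) 2 i + 1/2)) ?N"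
    by (rule Phi_eval) (simp_all add: R_cm_def pr3_def pr3s_def)
  have e2: "Phi R_cm ?N (?c(2 := 2)) 2 ?h = restrict (\<lambda>i. min ((?c(2:=2)) i) (R_cm ?N (ctilde ?N (?c(2:=2)) ?h) 2 i + 0)) ?N"
    by (rule Phi_eval) (simp_all add: R_cm_def pr3_def pr3s_def)
  have "Phi R_cm ?N (?c(2 := 2)) 2 ?h 2 \<ge> Phi R_cm ?N ?c 2 ?h 2"
    using g hp unfolding gen_claims_mono_def by force
  then show False unfolding e1 e2 by (simp add: R_cm_def pr3_def pr3s_def)
qed

lemma cu_counter: "\<not> gen_comp_up (Phi R_cu)"
proof
  assume g: "gen_comp_up (Phi R_cu)"
  let ?N = "{0,1,2::nat}"
  let ?c = "v3 1 1 1"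
  let ?h = "[(v3 1 0 0, v3 0 0 0)]"
  have hp: "hist_problem ?N ?c (5/2) ?h"
    by (simp add: hist_problem_def std_problem_def is_history_def allocation_def)
  have e1: "Phi R_cu ?N ?c (5/2) ?h = restrict (\<lambda>i. min (?c i) (R_cu ?N (ctilde ?N ?c ?h) (5/2) i + 1/2)) ?N"
    by (rule Phi_eval) (simp_all add: R_cu_def pr3_def)
  have e2: "Phi R_cu ?N ?c 2 ?h = restrict (\<lambda>i. min (?c i) (R_cu ?N (ctilde ?N ?c ?h) 2 i + 1/2)) ?N"
    by (rule Phi_eval) (simp_all add: R_cu_def pr3_def)
  define c' where "c' = restrict (\<lambda>k. ?c k - Phi R_cu ?N ?c 2 ?h k) ?N"
  have c'v: "c' 0 = 0" "c' 1 = 1/2" "c' (Suc 0) = 1/2" "c' 2 = 1/2"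
    unfolding c'_def e2 by (simp_all add: R_cu_def pr3_def)
  have e3: "Phi R_cu ?N c' (1/2) ?h = restrict (\<lambda>i. min (c' i) (R_cu ?N (ctilde ?N c' ?h) (1/2) i + 1/4)) ?N"
    by (rule Phi_eval) (simp_all add: R_cu_def pr3_def c'v)
  have "Phi R_cu ?N ?c (5/2) ?h 1 = Phi R_cu ?N ?c 2 ?h 1 + Phi R_cu ?N c' (1/2) ?h 1"
    unfolding c'_def by (rule g[unfolded gen_comp_up_def, rule_format]) (use hp in simp_all)
  then show False unfolding e1 e2 e3 by (simp add: R_cu_def pr3_def c'v)
qed

definition v2 :: "real \<Rightarrow> real \<Rightarrow> vec" where
  "v2 a b = restrict (\<lambda>i. if i = 0 then a else b) {0,1}"

lemma v2_simps[simp]: "v2 a b 0 = a" "v2 a b 1 = b" "v2 a b (Suc 0) = b" "v2 a b \<in> extensional {0,1}"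
  "v2 a b \<in> extensional {0, Suc 0}"
  by (auto simp: v2_def)

lemma sd_counter: "\<not> gen_self_dual (Phi prop_rule)"
proof
  assume g: "gen_self_dual (Phi prop_rule)"
  let ?N = "{0,1::nat}"
  let ?c = "v2 1 1"
  let ?h = "[(v2 2 0, v2 0 0)]"
  have hp: "hist_problem ?N ?c 1 ?h"
    by (simp add: hist_problem_def std_problem_def is_history_def allocation_def)
  have e1: "Phi prop_rule ?N ?c 1 ?h = restrict (\<lambda>i. min (?c i) (prop_rule ?N (ctilde ?N ?c ?h) 1 i + 0)) ?N"
    by (rule Phi_eval) (simp_all add: prop_rule_def)
  have "Phi prop_rule ?N ?c ((\<Sum>k\<in>?N. ?c k) - 1) ?h 0 = ?c 0 - Phi prop_rule ?N ?c 1 ?h 0"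
    by (rule g[unfolded gen_self_dual_def, rule_format]) (use hp in simp_all)
  moreover have "(\<Sum>k\<in>?N. ?c k) - 1 = 1" by simp
  ultimately have "Phi prop_rule ?N ?c 1 ?h 0 = ?c 0 - Phi prop_rule ?N ?c 1 ?h 0" by simp
  then show False unfolding e1 by (simp add: prop_rule_def)
qed

lemma cd_counter: "\<not> gen_comp_down (Phi prop_rule)"
proof
  assume g: "gen_comp_down (Phi prop_rule)"
  let ?N = "{0,1::nat}"
  let ?c = "v2 1 1"
  let ?h = "[(v2 2 0, v2 0 0)]"
  have hp: "hist_problem ?N ?c (1/2) ?h"
    by (simp add: hist_problem_def std_problem_def is_history_def allocation_def)
  have e1: "Phi prop_rule ?N ?c 1 ?h = restrict (\<lambda>i. min (?c i) (prop_rule ?N (ctilde ?N ?c ?h) 1 i + 0)) ?N"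
    by (rule Phi_eval) (simp_all add: prop_rule_def)
  have e2: "Phi prop_rule ?N ?c (1/2) ?h = restrict (\<lambda>i. min (?c i) (prop_rule ?N (ctilde ?N ?c ?h) (1/2) i + 0)) ?N"
    by (rule Phi_eval) (simp_all add: prop_rule_def)
  define c' where "c' = Phi prop_rule ?N ?c 1 ?h"
  have c'v: "c' 0 = 3/4" "c' 1 = 1/4" "c' (Suc 0) = 1/4"
    unfolding c'_def e1 by (simp_all add: prop_rule_def)
  have e3: "Phi prop_rule ?N c' (1/2) ?h = restrict (\<lambda>i. min (c' i) (prop_rule ?N (ctilde ?N c' ?h) (1/2) i + 0)) ?N"
    by (rule Phi_eval) (simp_all add: prop_rule_def c'v)
  have "Phi prop_rule ?N ?c (1/2) ?h 0 = Phi prop_rule ?N c' (1/2) ?h 0"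
    unfolding c'_def by (rule g[unfolded gen_comp_down_def, rule_format]) (use hp in simp_all)
  then show False unfolding e2 e3 by (simp add: prop_rule_def c'v)
qed

lemma pm_counter: "\<not> gen_pop_mono (Phi prop_rule)"
proof
  assume g: "gen_pop_mono (Phi prop_rule)"
  let ?N' = "{0,1,2::nat}"
  let ?N = "{0,1::nat}"
  let ?c = "v3 10 1 (1/2)"
  let ?h = "[(v3 0 0 (177/2), v3 0 0 0)]"
  have rh: "restrict_history ?h ?N = [(restrict (v3 0 0 (177/2)) ?N, restrict (v3 0 0 0) ?N)]"
    by (simp add: restrict_history_def)
  have hp: "hist_problem ?N' ?c 1 ?h"
    by (simp add: hist_problem_def std_problem_def is_history_def allocation_def)
  have hp2: "hist_problem ?N (restrict ?c ?N) 1 (restrict_history ?h ?N)"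
    unfolding rh by (simp add: hist_problem_def std_problem_def is_history_def allocation_def)
  have e1: "Phi prop_rule ?N' ?c 1 ?h = restrict (\<lambda>i. min (?c i) (prop_rule ?N' (ctilde ?N' ?c ?h) 1 i + 39/200)) ?N'"
    by (rule Phi_eval) (simp_all add: prop_rule_def)
  have e2: "Phi prop_rule ?N (restrict ?c ?N) 1 (restrict_history ?h ?N) = restrict (\<lambda>i. min (restrict ?c ?N i) (prop_rule ?N (ctilde ?N (restrict ?c ?N) (restrict_history ?h ?N)) 1 i + 0)) ?N"
    unfolding rh by (rule Phi_eval) (simp_all add: prop_rule_def)
  have "Phi prop_rule ?N' ?c 1 ?h 1 \<le> Phi prop_rule ?N (restrict ?c ?N) 1 (restrict_history ?h ?N) 1"
    by (rule g[unfolded gen_pop_mono_def, rule_format]) (use hp hp2 in simp_all)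
  then show False unfolding e1 e2 by (simp add: prop_rule_def restrict_history_def)
qed

lemma cons_e2: "Phi prop_rule {0,1} (restrict (v3 10 1 (1/2)) {0,1}) (1/2) [(restrict (v3 0 0 (177/2)) {0,1}, restrict (v3 0 0 0) {0,1})] = restrict (\<lambda>i. min (restrict (v3 10 1 (1/2)) {0,1} i) (prop_rule {0,1} (ctilde {0,1} (restrict (v3 10 1 (1/2)) {0,1}) [(restrict (v3 0 0 (177/2)) {0,1}, restrict (v3 0 0 0) {0,1})]) (1/2) i + 0)) {0,1}"
  by (rule Phi_eval) (simp_all add: prop_rule_def)

lemma cons_counter: "\<not> gen_consistent (Phi prop_rule)"
proof
  assume g: "gen_consistent (Phi prop_rule)"
  let ?N' = "{0,1,2::nat}"
  let ?N = "{0,1::nat}"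
  let ?c = "v3 10 1 (1/2)"
  let ?h = "[(v3 0 0 (177/2), v3 0 0 0)]"
  have rh: "restrict_history ?h ?N = [(restrict (v3 0 0 (177/2)) ?N, restrict (v3 0 0 0) ?N)]"
    by (simp add: restrict_history_def)
  have hp: "hist_problem ?N' ?c 1 ?h"
    by (simp add: hist_problem_def std_problem_def is_history_def allocation_def)
  have e1: "Phi prop_rule ?N' ?c 1 ?h = restrict (\<lambda>i. min (?c i) (prop_rule ?N' (ctilde ?N' ?c ?h) 1 i + 39/200)) ?N'"
    by (rule Phi_eval) (simp_all add: prop_rule_def)
  have p0: "Phi prop_rule ?N' ?c 1 ?h 0 = 59/200"
    unfolding e1 by (simp add: prop_rule_def)
  have p1: "Phi prop_rule ?N' ?c 1 ?h 1 = 41/200"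
    unfolding e1 by (simp add: prop_rule_def)
  have s01: "\<And>F::nat\<Rightarrow>real. (\<Sum>k\<in>{0,1::nat}. F k) = F 0 + F 1" by simp
  have EM: "(\<Sum>k\<in>?N. Phi prop_rule ?N' ?c 1 ?h k) = 1/2"
    unfolding s01 p0 p1 by simp
  have hp2: "hist_problem ?N (restrict ?c ?N) (1/2) (restrict_history ?h ?N)"
    unfolding rh by (simp add: hist_problem_def std_problem_def is_history_def allocation_def)
  have e2: "Phi prop_rule ?N (restrict ?c ?N) (1/2) (restrict_history ?h ?N) 0 = 5/11"
    unfolding rh cons_e2 by (simp add: prop_rule_def)
  have sub: "?N \<subset> ?N'" unfolding psubset_eq by (simp add: insert_ident)
  have "Phi prop_rule ?N' ?c 1 ?h 0 = Phi prop_rule ?N (restrict ?c ?N) (\<Sum>k\<in>?N. Phi prop_rule ?N' ?c 1 ?h k) (restrict_history ?h ?N) 0"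
  proof -
    have inst: "hist_problem ?N' ?c 1 ?h \<and> ?N \<subset> ?N' \<and> hist_problem ?N (restrict ?c ?N) (\<Sum>k\<in>?N. Phi prop_rule ?N' ?c 1 ?h k) (restrict_history ?h ?N)"
      unfolding EM using hp hp2 sub by blast
    have X: "\<forall>i\<in>?N. Phi prop_rule ?N' ?c 1 ?h i = Phi prop_rule ?N (restrict ?c ?N) (\<Sum>k\<in>?N. Phi prop_rule ?N' ?c 1 ?h k) (restrict_history ?h ?N) i"
      using g[unfolded gen_consistent_def, THEN spec[of _ ?N'], THEN spec[of _ ?N], THEN spec[of _ ?c],
        THEN spec[of _ 1], THEN spec[of _ ?h], THEN mp, OF inst] .
    show ?thesis using X by blast
  qed
  then have "Phi prop_rule ?N' ?c 1 ?h 0 = Phi prop_rule ?N (restrict ?c ?N) (1/2) (restrict_history ?h ?N) 0"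
    unfolding EM .
  then show False unfolding p0 e2 by simp
qed

theorem theorem2:
  shows "(\<exists>R. std_rule R \<and> std_claims_mono R \<and> \<not> gen_claims_mono (Phi R)) \<and>
         (\<exists>R. std_rule R \<and> std_comp_up R \<and> \<not> gen_comp_up (Phi R)) \<and>
         (\<exists>R. std_rule R \<and> std_comp_down R \<and> \<not> gen_comp_down (Phi R)) \<and>
         (\<exists>R. std_rule R \<and> std_self_dual R \<and> \<not> gen_self_dual (Phi R)) \<and>
         (\<exists>R. std_rule R \<and> std_pop_mono R \<and> \<not> gen_pop_mono (Phi R)) \<and>
         (\<exists>R. std_rule R \<and> std_consistent R \<and> \<not> gen_consistent (Phi R))"
  using R_cm_std R_cm_claims_mono cm_counter R_cu_std R_cu_comp_up cu_counter
    prop_std prop_comp_down cd_counter prop_self_dual sd_counter prop_pop_mono pm_counter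
    prop_consistent cons_counter by blast


end
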